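(* Let $i\ge1$, $j\ge 1$ and $n\ge0$ be integers. If $2^{i-1}<d_j(n)\le 2^i$, then $d_j(n)=d_{i+1}(n)$. Furthermore, $2^{i-1}<d_{i+1}(n)\le 2^i$ if and only if $-2^{i-1}<(n\bmod 2^{i+1})-2^i<2^{i-1}$.
   Context: For $i\in\mathbb{N}$ and $n\in\mathbb{N}_0$, $d_i(n)=2^{i-1}-\left|(n\bmod 2^i)-2^{i-1}\right|$. *)

theory Defs
  imports Main
begin

definition d :: "nat \<Rightarrow> nat \<Rightarrow> int" where
  "d i n = 2 ^ (i - 1) - \<bar>(int n mod 2 ^ i) - 2 ^ (i - 1)\<bar>"

end

theory Submission
  imports Defs
begin

lemma part1:
  fixes i j n :: nat
  assumes "i \<ge> 1" "j \<ge> 1" "2 ^ (i - 1) < d j n" "d j n \<le> 2 ^ i"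
  shows "d j n = d (i + 1) n"
proof -
  have "d j n \<le> 2 ^ (j - 1)" unfolding d_def by simp
  with assms(3) have "(2::int) ^ (i - 1) < 2 ^ (j - 1)" by linarith
  hence "i - 1 < j - 1" using power_strict_increasing_iff[of "2::int"] by simp
  hence ji: "j \<ge> i + 1" using assms by linarith
  obtain k where jk: "j = i + 1 + k" using ji le_Suc_ex by blast
  define P :: int where "P = 2 ^ i"
  define Q :: int where "Q = 2 ^ j"
  have P0: "P > 0" unfolding P_def by simp
  have QP: "Q = 2 * P * 2 ^ k" unfolding Q_def P_def jk by (simp add: power_add)
  have Qh: "2 ^ (j - 1) = P * 2 ^ k" unfolding P_def using jk by (simp add: power_add)
  have ih: "(2::int) ^ (i + 1 - 1) = P" unfolding P_def by simp
  have i1: "(2::int) ^ (i + 1) = 2 * P" unfolding P_def by simp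
  define a where "a = int n mod Q"
  define b where "b = int n mod (2 * P)"
  have a0: "0 \<le> a" "a < Q" unfolding a_def Q_def by simp_all
  have b0: "0 \<le> b" "b < 2 * P" unfolding b_def using P0 by simp_all
  have dvd: "2 * P dvd Q" unfolding QP by simp
  have ab: "b = a mod (2 * P)" unfolding a_def b_def using dvd by (simp add: mod_mod_cancel)
  have dj: "d j n = P * 2 ^ k - \<bar>a - P * 2 ^ k\<bar>" unfolding d_def a_def Q_def Qh by simp
  have di: "d (i + 1) n = P - \<bar>b - P\<bar>" unfolding d_def b_def ih i1 by simp
  have pk: "P \<le> P * 2 ^ k" using P0 by simp
  show ?thesis
  proof (cases "a \<le> P * 2 ^ k")
    case True
    hence "d j n = a" using dj by simp
    hence "a \<le> P" using assms(4) P_def by simp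
    hence "b = a" using ab a0 P0 by simp
    thus ?thesis using di \<open>d j n = a\<close> \<open>a \<le> P\<close> by simp
  next
    case False
    hence e: "d j n = Q - a" using dj QP by (simp add: algebra_simps)
    hence "a \<ge> Q - P" using assms(4) P_def by simp
    define c where "c = a - (Q - 2 * P)"
    have c0: "0 \<le> c" "c < 2 * P" unfolding c_def using \<open>a \<ge> Q - P\<close> a0 P0 by simp_all
    obtain m where "Q = 2 * P * m" using dvd by blast
    hence "a = c + (2 * P) * (m - 1)" unfolding c_def by (simp add: algebra_simps)
    hence "a mod (2 * P) = c mod (2 * P)" by simp
    hence "b = c" using ab c0 by simp
    hence "b \<ge> P" unfolding c_def using \<open>a \<ge> Q - P\<close> by simp
    thus ?thesis using di e \<open>b = c\<close> c_def by simp
  qed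
qed

theorem lemma14:
  fixes i j n :: nat
  assumes "i \<ge> 1" and "j \<ge> 1"
  shows "(2 ^ (i - 1) < d j n \<and> d j n \<le> 2 ^ i \<longrightarrow> d j n = d (i + 1) n)
     \<and> ((2 ^ (i - 1) < d (i + 1) n \<and> d (i + 1) n \<le> 2 ^ i) \<longleftrightarrow>
          (- (2 ^ (i - 1)) < (int n mod 2 ^ (i + 1)) - 2 ^ i \<and>
           (int n mod 2 ^ (i + 1)) - 2 ^ i < (2 ^ (i - 1) :: int)))"
proof -
  define m where "m = int n mod 2 ^ (i + 1)"
  define H :: int where "H = 2 ^ (i - 1)"
  have e: "d (i + 1) n = 2 ^ i - \<bar>m - 2 ^ i\<bar>" unfolding d_def m_def by simp
  have p: "(2::int) ^ i = 2 * H" unfolding H_def using assms(1) by (cases i) simp_all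
  have "(2 ^ (i - 1) < d (i + 1) n \<and> d (i + 1) n \<le> 2 ^ i) \<longleftrightarrow> (- H < m - 2 ^ i \<and> m - 2 ^ i < H)"
    unfolding e p H_def[symmetric] by (simp add: abs_less_iff) (simp add: conj_commute)
  thus ?thesis using part1[OF assms] unfolding m_def H_def by blast
qed

end
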